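(* Let $k$ be a field and let $X$ be a $\mathcal{T}$-space. Assume that there exist $V_n\in\mathcal{T}$, $n\in\mathbb{N}$, such that $\{V_n\}_{n\in\mathbb{N}}$ is a covering of $X$ in the site $X_{\mathcal{T}_{loc}}$, i.e. for every $W\in\mathcal{T}$ finitely many of the $V_n$ cover $W$. Let $F\in\mathrm{Mod}(k_\mathcal{T})$. Then $F$ is $\mathcal{T}$-flabby if and only if the restriction $\Gamma(X;F)\to\Gamma(U;F)$ is surjective for every $U\in\mathcal{T}_{loc}$.
   Context: Let $X$ be a topological space and $\mathcal{T}$ a family of open subsets of $X$. A $\mathcal{T}$-subset of $X$ is a finite Boolean combination of elements of $\mathcal{T}$; a $\mathcal{T}$-connected subset is a $\mathcal{T}$-subset which is not the disjoint union of two proper $\mathcal{T}$-subsets that are both open and closed in it. $X$ is a $\mathcal{T}$-space if (i) $\mathcal{T}$ is a basis of the topology of $X$ and $\emptyset\in\mathcal{T}$; (ii) $\mathcal{T}$ is closed under finite unions and finite intersections; (iii) every $U\in\mathcal{T}$ has finitely many $\mathcal{T}$-connected components. $X_\mathcal{T}$ is the site whose underlying category is $\mathcal{T}$ (morphisms are inclusions), a family $\{U_i\}\subset\mathcal{T}$ of subsets of $U\in\mathcal{T}$ being a covering of $U$ iff it admits a finite subfamily whose union is $U$; $\mathrm{Mod}(k_\mathcal{T})$ is the category of sheaves of $k$-vector spaces on $X_\mathcal{T}$. $F\in\mathrm{Mod}(k_\mathcal{T})$ is $\mathcal{T}$-flabby if for all $U,V\in\mathcal{T}$ with $U\subseteq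 V$ the restriction $\Gamma(V;F)\to\Gamma(U;F)$ is surjective. Let $\mathcal{T}_{loc}=\{U\subseteq X\text{ open}: U\cap W\in\mathcal{T}\text{ for every }W\in\mathcal{T}\}$ (note $X\in\mathcal{T}_{loc}$). $X_{\mathcal{T}_{loc}}$ is the site on $\mathcal{T}_{loc}$ where $\{U_i\}\subset\mathcal{T}_{loc}$ covers $U\in\mathcal{T}_{loc}$ iff for every $V\in\mathcal{T}$ a finite subfamily covers $U\cap V$. Every $F\in\mathrm{Mod}(k_\mathcal{T})$ extends uniquely to a sheaf on $X_{\mathcal{T}_{loc}}$, and for $U\in\mathcal{T}_{loc}$ one sets $\Gamma(U;F)=\varprojlim_{V\in\mathcal{T}}\Gamma(U\cap V;F)$. *)

theory Defs
  imports "HOL-Analysis.Abstract_Topology" "HOL-Algebra.Module"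
begin

inductive_set T_subsets :: "'a topology \<Rightarrow> 'a set set \<Rightarrow> 'a set set"
  for X :: "'a topology" and T :: "'a set set" where
  basic: "A \<in> T \<Longrightarrow> A \<in> T_subsets X T"
| compl: "A \<in> T_subsets X T \<Longrightarrow> topspace X - A \<in> T_subsets X T"
| union: "A \<in> T_subsets X T \<Longrightarrow> B \<in> T_subsets X T \<Longrightarrow> A \<union> B \<in> T_subsets X T"
| inter: "A \<in> T_subsets X T \<Longrightarrow> B \<in> T_subsets X T \<Longrightarrow> A \<inter> B \<in> T_subsets X T"

definition T_connected :: "'a topology \<Rightarrow> 'a set set \<Rightarrow> 'a set \<Rightarrow> bool" where
  "T_connected X T A \<longleftrightarrow> A \<in> T_subsets X T \<and>
     \<not> (\<exists>B C. B \<in> T_subsets X T \<and> C \<in> T_subsets X T \<and> B \<noteq> A \<and> C \<noteq> A \<and>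
            B \<inter> C = {} \<and> B \<union> C = A \<and>
            openin (subtopology X A) B \<and> closedin (subtopology X A) B \<and>
            openin (subtopology X A) C \<and> closedin (subtopology X A) C)"

definition T_components :: "'a topology \<Rightarrow> 'a set set \<Rightarrow> 'a set \<Rightarrow> 'a set set" where
  "T_components X T U = {C. C \<noteq> {} \<and> C \<subseteq> U \<and> T_connected X T C \<and>
      (\<forall>D. D \<subseteq> U \<and> T_connected X T D \<and> C \<subseteq> D \<longrightarrow> D = C)}"

definition T_space :: "'a topology \<Rightarrow> 'a set set \<Rightarrow> bool" where
  "T_space X T \<longleftrightarrow>
     (\<forall>U\<in>T. openin X U) \<and>
     (\<forall>W. openin X W \<longrightarrow> (\<forall>x\<in>W. \<exists>U\<in>T. x \<in> U \<and> U \<subseteq> W)) \<and>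
     {} \<in> T \<and>
     (\<forall>U\<in>T. \<forall>V\<in>T. U \<union> V \<in> T \<and> U \<inter> V \<in> T) \<and>
     (\<forall>U\<in>T. finite (T_components X T U))"

definition K_linear :: "('k, 'r) ring_scheme \<Rightarrow> ('k, 'v) module \<Rightarrow> ('k, 'v) module \<Rightarrow> ('v \<Rightarrow> 'v) \<Rightarrow> bool" where
  "K_linear K M N f \<longleftrightarrow>
     (\<forall>x\<in>carrier M. f x \<in> carrier N) \<and>
     (\<forall>x\<in>carrier M. \<forall>y\<in>carrier M. f (x \<oplus>\<^bsub>M\<^esub> y) = f x \<oplus>\<^bsub>N\<^esub> f y) \<and>
     (\<forall>a\<in>carrier K. \<forall>x\<in>carrier M. f (a \<odot>\<^bsub>M\<^esub> x) = a \<odot>\<^bsub>N\<^esub> f x)"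

definition T_presheaf :: "'a set set \<Rightarrow> ('k, 'r) ring_scheme \<Rightarrow> ('a set \<Rightarrow> ('k, 'v) module)
    \<Rightarrow> ('a set \<Rightarrow> 'a set \<Rightarrow> 'v \<Rightarrow> 'v) \<Rightarrow> bool" where
  "T_presheaf T K F res \<longleftrightarrow>
     (\<forall>U\<in>T. module K (F U)) \<and>
     (\<forall>U\<in>T. \<forall>V\<in>T. U \<subseteq> V \<longrightarrow> K_linear K (F V) (F U) (res V U)) \<and>
     (\<forall>U\<in>T. \<forall>s\<in>carrier (F U). res U U s = s) \<and>
     (\<forall>U\<in>T. \<forall>V\<in>T. \<forall>W\<in>T. U \<subseteq> V \<longrightarrow> V \<subseteq> W \<longrightarrow>
        (\<forall>s\<in>carrier (F W). res V U (res W V s) = res W U s))"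

definition T_covering :: "'a set set \<Rightarrow> 'a set set \<Rightarrow> 'a set \<Rightarrow> bool" where
  "T_covering T \<U> U \<longleftrightarrow> \<U> \<subseteq> T \<and> (\<forall>W\<in>\<U>. W \<subseteq> U) \<and>
     (\<exists>\<V>. \<V> \<subseteq> \<U> \<and> finite \<V> \<and> \<Union>\<V> = U)"

definition T_sheaf :: "'a set set \<Rightarrow> ('k, 'r) ring_scheme \<Rightarrow> ('a set \<Rightarrow> ('k, 'v) module)
    \<Rightarrow> ('a set \<Rightarrow> 'a set \<Rightarrow> 'v \<Rightarrow> 'v) \<Rightarrow> bool" where
  "T_sheaf T K F res \<longleftrightarrow> T_presheaf T K F res \<and>
     (\<forall>U\<in>T. \<forall>\<U>. T_covering T \<U> U \<longrightarrow>
        (\<forall>s\<in>carrier (F U). \<forall>t\<in>carrier (F U).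
            (\<forall>W\<in>\<U>. res U W s = res U W t) \<longrightarrow> s = t) \<and>
        (\<forall>f. (\<forall>W\<in>\<U>. f W \<in> carrier (F W)) \<and>
             (\<forall>W1\<in>\<U>. \<forall>W2\<in>\<U>. res W1 (W1 \<inter> W2) (f W1) = res W2 (W1 \<inter> W2) (f W2)) \<longrightarrow>
             (\<exists>s\<in>carrier (F U). \<forall>W\<in>\<U>. res U W s = f W)))"

definition T_flabby :: "'a set set \<Rightarrow> ('a set \<Rightarrow> ('k, 'v) module)
    \<Rightarrow> ('a set \<Rightarrow> 'a set \<Rightarrow> 'v \<Rightarrow> 'v) \<Rightarrow> bool" where
  "T_flabby T F res \<longleftrightarrow>
     (\<forall>U\<in>T. \<forall>V\<in>T. U \<subseteq> V \<longrightarrow> res V U ` carrier (F V) = carrier (F U))"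

definition T_loc :: "'a topology \<Rightarrow> 'a set set \<Rightarrow> 'a set set" where
  "T_loc X T = {U. openin X U \<and> (\<forall>W\<in>T. U \<inter> W \<in> T)}"

text \<open>Gamma(U;F) = inverse limit over V in T of Gamma(U \<inter> V; F), realised as the set of
  compatible families (indexed by V in T).\<close>
definition Gamma_loc :: "'a set set \<Rightarrow> ('a set \<Rightarrow> ('k, 'v) module)
    \<Rightarrow> ('a set \<Rightarrow> 'a set \<Rightarrow> 'v \<Rightarrow> 'v) \<Rightarrow> 'a set \<Rightarrow> ('a set \<Rightarrow> 'v) set" where
  "Gamma_loc T F res U = {f.
     (\<forall>V\<in>T. f V \<in> carrier (F (U \<inter> V))) \<and>
     (\<forall>V\<in>T. \<forall>V'\<in>T. V \<subseteq> V' \<longrightarrow> res (U \<inter> V') (U \<inter> V) (f V') = f V)}"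

definition Gamma_res_surj :: "'a set set \<Rightarrow> ('a set \<Rightarrow> ('k, 'v) module)
    \<Rightarrow> ('a set \<Rightarrow> 'a set \<Rightarrow> 'v \<Rightarrow> 'v) \<Rightarrow> 'a set \<Rightarrow> 'a set \<Rightarrow> bool" where
  "Gamma_res_surj T F res U U' \<longleftrightarrow>
     (\<forall>f\<in>Gamma_loc T F res U'. \<exists>g\<in>Gamma_loc T F res U.
        \<forall>V\<in>T. res (U \<inter> V) (U' \<inter> V) (g V) = f V)"

end

theory Submission
  imports Defs
begin

fun Wseq :: "(nat \<Rightarrow> 'a set) \<Rightarrow> nat \<Rightarrow> 'a set" where
  "Wseq V 0 = V 0"
| "Wseq V (Suc n) = Wseq V n \<union> V (Suc n)"
lemma Wseq_mono: "m \<le> n \<Longrightarrow> Wseq V m \<subseteq> Wseq V n"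
proof (induction n rule: dec_induct)
  case base then show ?case by (rule subset_refl)
next
  case (step n) then show ?case by auto
qed
lemma Wseq_ge: "i \<le> n \<Longrightarrow> V i \<subseteq> Wseq V n"
proof -
  assume a: "i \<le> n"
  have "V i \<subseteq> Wseq V i" by (cases i) auto
  then show ?thesis using Wseq_mono[OF a] by (rule subset_trans)
qed
lemma Wseq_T: "(\<forall>n. V n \<in> T) \<Longrightarrow> (\<forall>A\<in>T. \<forall>B\<in>T. A \<union> B \<in> T) \<Longrightarrow> Wseq V n \<in> T"
  by (induction n) auto

theorem mainTheorem19:
  fixes X :: "'a topology" and T :: "'a set set"
    and K :: "'k ring"
    and F :: "'a set \<Rightarrow> ('k, 'v) module" and res :: "'a set \<Rightarrow> 'a set \<Rightarrow> 'v \<Rightarrow> 'v"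
    and Vn :: "nat \<Rightarrow> 'a set"
  assumes "field K"
    and "T_space X T"
    and "\<forall>n. Vn n \<in> T"
    and "\<forall>W\<in>T. \<exists>I. finite I \<and> W \<subseteq> (\<Union>n\<in>I. Vn n)"
    and "T_sheaf T K F res"
  shows "T_flabby T F res \<longleftrightarrow>
           (\<forall>U\<in>T_loc X T. Gamma_res_surj T F res (topspace X) U)"
proof -
  have ts1: "\<forall>U\<in>T. openin X U"
    using assms(2) unfolding T_space_def by (elim conjE) assumption
  have ts4: "\<forall>U\<in>T. \<forall>V\<in>T. U \<union> V \<in> T \<and> U \<inter> V \<in> T"
    using assms(2) unfolding T_space_def by (elim conjE) assumption
  have Topen: "\<And>U. U \<in> T \<Longrightarrow> openin X U" using ts1 by (rule bspec)
  have Tun: "\<forall>A\<in>T. \<forall>B\<in>T. A \<union> B \<in> T" using ts4 by blast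
  have Tint: "\<And>A B. A \<in> T \<Longrightarrow> B \<in> T \<Longrightarrow> A \<inter> B \<in> T" using ts4 by blast
  have sub: "\<And>U. U \<in> T \<Longrightarrow> U \<subseteq> topspace X" using Topen openin_subset by blast
  have pre: "T_presheaf T K F res" using assms(5) unfolding T_sheaf_def by (rule conjunct1)
  have pre1: "\<forall>U\<in>T. \<forall>V\<in>T. U \<subseteq> V \<longrightarrow> K_linear K (F V) (F U) (res V U)"
    using pre unfolding T_presheaf_def by (elim conjE) assumption
  have pre2: "\<forall>U\<in>T. \<forall>s\<in>carrier (F U). res U U s = s"
    using pre unfolding T_presheaf_def by (elim conjE) assumption
  have pre3: "\<forall>U\<in>T. \<forall>V\<in>T. \<forall>W\<in>T. U \<subseteq> V \<longrightarrow> V \<subseteq> W \<longrightarrow>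
        (\<forall>s\<in>carrier (F W). res V U (res W V s) = res W U s)"
    using pre unfolding T_presheaf_def by (elim conjE) assumption
  have resC: "\<And>U V s. U\<in>T \<Longrightarrow> V\<in>T \<Longrightarrow> U\<subseteq>V \<Longrightarrow> s \<in> carrier (F V) \<Longrightarrow> res V U s \<in> carrier (F U)"
  proof -
    fix U V s assume "U\<in>T" "V\<in>T" "U\<subseteq>V" "s \<in> carrier (F V)"
    then have "K_linear K (F V) (F U) (res V U)" using pre1 by blast
    then have "\<forall>x\<in>carrier (F V). res V U x \<in> carrier (F U)" unfolding K_linear_def by (rule conjunct1)
    then show "res V U s \<in> carrier (F U)" using \<open>s \<in> carrier (F V)\<close> by (rule bspec)
  qed
  have resI: "\<And>U s. U\<in>T \<Longrightarrow> s\<in>carrier(F U) \<Longrightarrow> res U U s = s"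
    using pre2 by blast
  have resT: "\<And>U V W s. U\<in>T \<Longrightarrow> V\<in>T \<Longrightarrow> W\<in>T \<Longrightarrow> U\<subseteq>V \<Longrightarrow> V\<subseteq>W \<Longrightarrow> s\<in>carrier(F W)
      \<Longrightarrow> res V U (res W V s) = res W U s"
    using pre3 by blast
  have glue: "\<exists>t\<in>carrier(F(A\<union>B)). res (A\<union>B) A t = a \<and> res (A\<union>B) B t = b"
    if AB: "A\<in>T" "B\<in>T" "a\<in>carrier(F A)" "b\<in>carrier(F B)" "res A (A\<inter>B) a = res B (A\<inter>B) b"
    for A B a b
  proof -
    define h where "h = (\<lambda>W. if W = A then a else b)"
    have AUB: "A \<union> B \<in> T" using Tun AB by blast
    have cov: "T_covering T {A, B} (A \<union> B)" unfolding T_covering_def using AB by blast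
    have hc: "\<forall>W\<in>{A,B}. h W \<in> carrier (F W)" using AB h_def by auto
    have hcomp: "\<forall>W1\<in>{A,B}. \<forall>W2\<in>{A,B}. res W1 (W1 \<inter> W2) (h W1) = res W2 (W1 \<inter> W2) (h W2)"
      using AB(5) by (auto simp: h_def Int_commute)
    obtain t where t: "t \<in> carrier (F (A\<union>B))" "\<forall>W\<in>{A,B}. res (A\<union>B) W t = h W"
      using assms(5) AUB cov hc hcomp unfolding T_sheaf_def by blast
    have "h B = b"
    proof (cases "B = A")
      case True
      then have "res A A a = res A A b" using AB(5) by simp
      then show ?thesis using True resI AB h_def by auto
    qed (simp add: h_def)
    then show ?thesis using t h_def by auto
  qed
  show ?thesis
  proof
    assume fl: "T_flabby T F res"
    have ext: "\<exists>s\<in>carrier(F B). res B A s = t"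
      if "A\<in>T" "B\<in>T" "A\<subseteq>B" "t\<in>carrier(F A)" for A B t
    proof -
      have "res B A ` carrier (F B) = carrier (F A)" using fl that(1,2,3) unfolding T_flabby_def by blast
      then have "t \<in> res B A ` carrier (F B)" using that(4) by simp
      then show ?thesis by (elim imageE) (rule bexI, rule sym)
    qed
    show "\<forall>U\<in>T_loc X T. Gamma_res_surj T F res (topspace X) U"
    proof (intro ballI)
      fix U assume "U \<in> T_loc X T"
      then have UT: "\<And>W. W\<in>T \<Longrightarrow> U\<inter>W \<in> T" unfolding T_loc_def by blast
      show "Gamma_res_surj T F res (topspace X) U"
        unfolding Gamma_res_surj_def
      proof
        fix f assume "f \<in> Gamma_loc T F res U"
        then have fC: "\<And>V. V\<in>T \<Longrightarrow> f V \<in> carrier(F(U\<inter>V))"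
          and fcomp: "\<And>V V'. V\<in>T \<Longrightarrow> V'\<in>T \<Longrightarrow> V\<subseteq>V' \<Longrightarrow> res (U\<inter>V') (U\<inter>V) (f V') = f V"
          unfolding Gamma_loc_def by blast+
        define W where "W = Wseq Vn"
        have WT: "\<And>n. W n \<in> T" unfolding W_def using Wseq_T assms(3) Tun by blast
        have Wm: "\<And>m n. m \<le> n \<Longrightarrow> W m \<subseteq> W n" unfolding W_def by (rule Wseq_mono)
        define P where "P n x \<longleftrightarrow> x \<in> carrier (F (W n)) \<and> res (W n) (U \<inter> W n) x = f (W n)" for n x
        have step: "\<exists>y. P (Suc n) y \<and> res (W (Suc n)) (W n) y = x" if Px: "P n x" for n x
        proof -
          let ?A = "W n" and ?B = "U \<inter> W (Suc n)"
          have xC: "x \<in> carrier (F (W n))" and xr: "res (W n) (U \<inter> W n) x = f (W n)"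
            using Px unfolding P_def by blast+
          have AT: "?A \<in> T" by (rule WT)
          have BT: "?B \<in> T" by (rule UT[OF WT])
          have Wn: "W n \<subseteq> W (Suc n)" by (rule Wm) simp
          have AB: "?A \<inter> ?B = U \<inter> W n" using Wn by blast
          have fc: "res (U \<inter> W (Suc n)) (U \<inter> W n) (f (W (Suc n))) = f (W n)"
            by (rule fcomp[OF WT WT Wn])
          have "res ?A (?A \<inter> ?B) x = res ?B (?A \<inter> ?B) (f (W (Suc n)))"
            unfolding AB xr fc ..
          then have "\<exists>t\<in>carrier(F(?A\<union>?B)). res (?A\<union>?B) ?A t = x \<and> res (?A\<union>?B) ?B t = f (W (Suc n))"
            by (rule glue[OF AT BT xC fC[OF WT]])
          then obtain t where t: "t\<in>carrier(F(?A\<union>?B))" "res (?A\<union>?B) ?A t = x"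
            "res (?A\<union>?B) ?B t = f (W (Suc n))"
            by blast
          have ABT: "?A \<union> ?B \<in> T" using Tun AT BT by blast
          have ABs: "?A \<union> ?B \<subseteq> W (Suc n)" using Wn by blast
          have "\<exists>y\<in>carrier (F (W (Suc n))). res (W (Suc n)) (?A\<union>?B) y = t"
            by (rule ext[OF ABT WT ABs t(1)])
          then obtain y where y: "y \<in> carrier (F (W (Suc n)))" "res (W (Suc n)) (?A\<union>?B) y = t"
            by blast
          have "res (W (Suc n)) ?A y = res (?A\<union>?B) ?A (res (W (Suc n)) (?A\<union>?B) y)"
            by (rule resT[OF AT ABT WT Un_upper1 ABs y(1), symmetric])
          then have y1: "res (W (Suc n)) ?A y = x" unfolding y(2) t(2) .
          have "res (W (Suc n)) ?B y = res (?A\<union>?B) ?B (res (W (Suc n)) (?A\<union>?B) y)"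
            by (rule resT[OF BT ABT WT Un_upper2 ABs y(1), symmetric])
          then have y2: "res (W (Suc n)) ?B y = f (W (Suc n))" unfolding y(2) t(3) .
          have "P (Suc n) y" unfolding P_def using y(1) y2 by blast
          then show ?thesis using y1 by blast
        qed
        have base: "\<exists>x. P 0 x"
        proof -
          have "\<exists>s\<in>carrier(F(W 0)). res (W 0) (U \<inter> W 0) s = f (W 0)"
            by (rule ext[OF UT[OF WT] WT Int_lower2 fC[OF WT]])
          then show ?thesis unfolding P_def by blast
        qed
        define s where "s = rec_nat (SOME x. P 0 x) (\<lambda>n x. SOME y. P (Suc n) y \<and> res (W (Suc n)) (W n) y = x)"
        have s0: "s 0 = (SOME x. P 0 x)" by (simp add: s_def)
        have sS: "s (Suc n) = (SOME y. P (Suc n) y \<and> res (W (Suc n)) (W n) y = s n)" for n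
          by (simp add: s_def)
        have Ps: "P n (s n)" for n
        proof (induction n)
          case 0 show ?case unfolding s0 by (rule someI_ex[OF base])
        next
          case (Suc n)
          have "P (Suc n) (s (Suc n)) \<and> res (W (Suc n)) (W n) (s (Suc n)) = s n"
            unfolding sS using someI_ex[OF step[OF Suc]] .
          then show ?case by blast
        qed
        have sres: "res (W (Suc n)) (W n) (s (Suc n)) = s n" for n
        proof -
          have "P (Suc n) (s (Suc n)) \<and> res (W (Suc n)) (W n) (s (Suc n)) = s n"
            unfolding sS using someI_ex[OF step[OF Ps]] .
          then show ?thesis by blast
        qed
        have sC: "s n \<in> carrier (F (W n))" for n using Ps P_def by blast
        have scomp: "res (W n) (W m) (s n) = s m" if "m \<le> n" for m n
          using that
        proof (induction n rule: dec_induct)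
          case base then show ?case using resI WT sC by blast
        next
          case (step n)
          have "res (W (Suc n)) (W m) (s (Suc n)) = res (W n) (W m) (res (W (Suc n)) (W n) (s (Suc n)))"
            using resT[OF WT WT WT Wm[OF step(1)] Wm[of n "Suc n"] sC] by simp
          also have "\<dots> = res (W n) (W m) (s n)" by (simp only: sres)
          also have "\<dots> = s m" by (rule step.IH)
          finally show ?case .
        qed
        have cover: "\<exists>M. V \<subseteq> W M" if "V \<in> T" for V
        proof -
          have "\<exists>I. finite I \<and> V \<subseteq> (\<Union>n\<in>I. Vn n)" using assms(4) that by (rule bspec)
          then obtain I where I: "finite I" "V \<subseteq> (\<Union>n\<in>I. Vn n)" by (elim exE conjE)
          let ?M = "Max (insert 0 I)"
          have "Vn i \<subseteq> W ?M" if "i \<in> I" for i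
            unfolding W_def using I(1) that by (intro Wseq_ge) simp
          then have "(\<Union>n\<in>I. Vn n) \<subseteq> W ?M" by (rule UN_least)
          then show ?thesis using I(2) by (intro exI[of _ ?M]) (rule subset_trans)
        qed
        have indep: "res (W N) V (s N) = res (W M) V (s M)"
          if "V \<in> T" "V \<subseteq> W N" "V \<subseteq> W M" for V N M
        proof -
          have gen: "res (W b) V (s b) = res (W a) V (s a)" if "a \<le> b" "V \<subseteq> W a" for a b
            using resT[OF \<open>V\<in>T\<close> WT WT that(2) Wm[OF that(1)] sC] scomp[OF that(1)] by simp
          show ?thesis
          proof (cases "M \<le> N")
            case True
            show ?thesis using gen[OF True that(3)] .
          next
            case False
            then have "N \<le> M" by simp
            show ?thesis using gen[OF \<open>N \<le> M\<close> that(2)] by simp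
          qed
        qed
        define N where "N V = (LEAST N. V \<subseteq> W N)" for V
        define g where "g V = res (W (N V)) V (s (N V))" for V
        have gN: "g V = res (W M) V (s M)" if "V \<in> T" "V \<subseteq> W M" for V M
        proof -
          have "V \<subseteq> W (N V)" unfolding N_def using that(2) by (rule LeastI)
          have "g V = res (W (N V)) V (s (N V))" by (simp add: g_def)
          also have "\<dots> = res (W M) V (s M)" by (rule indep[OF that(1) \<open>V \<subseteq> W (N V)\<close> that(2)])
          finally show ?thesis .
        qed
        have XV: "\<And>V. V \<in> T \<Longrightarrow> topspace X \<inter> V = V" using sub by blast
        have gC: "g V \<in> carrier (F V)" if "V \<in> T" for V
        proof -
          have "\<exists>M. V \<subseteq> W M" by (rule cover[OF that])
          then obtain M where M: "V \<subseteq> W M" by blast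
          show ?thesis unfolding gN[OF that M] by (rule resC[OF that WT M sC])
        qed
        have gcomp: "res V' V (g V') = g V" if "V\<in>T" "V'\<in>T" "V \<subseteq> V'" for V V'
        proof -
          have "\<exists>M. V' \<subseteq> W M" by (rule cover[OF that(2)])
          then obtain M where M: "V' \<subseteq> W M" by blast
          have VM: "V \<subseteq> W M" using M that(3) by (rule_tac subset_trans)
          have "res V' V (g V') = res (W M) V (s M)"
            unfolding gN[OF that(2) M] by (rule resT[OF that(1,2) WT that(3) M sC])
          then show ?thesis unfolding gN[OF that(1) VM] .
        qed
        have gf: "res V (U \<inter> V) (g V) = f V" if "V \<in> T" for V
        proof -
          have "\<exists>M. V \<subseteq> W M" by (rule cover[OF that])
          then obtain M where M: "V \<subseteq> W M" by blast
          have "res V (U \<inter> V) (g V) = res (W M) (U \<inter> V) (s M)"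
            unfolding gN[OF that M] by (rule resT[OF UT[OF that] that WT _ M sC]) blast
          also have "\<dots> = res (U \<inter> W M) (U \<inter> V) (res (W M) (U \<inter> W M) (s M))"
            by (rule resT[OF UT[OF that] UT[OF WT] WT _ _ sC, symmetric]) (use M in auto)
          also have "\<dots> = res (U \<inter> W M) (U \<inter> V) (f (W M))" using Ps[of M] unfolding P_def by simp
          also have "\<dots> = f V" using fcomp[OF that WT M] .
          finally show ?thesis .
        qed
        show "\<exists>g\<in>Gamma_loc T F res (topspace X). \<forall>V\<in>T. res (topspace X \<inter> V) (U \<inter> V) (g V) = f V"
        proof (rule bexI[of _ g])
          show "g \<in> Gamma_loc T F res (topspace X)" unfolding Gamma_loc_def
          proof (intro CollectI conjI ballI impI)
            fix V assume V: "V \<in> T"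
            show "g V \<in> carrier (F (topspace X \<inter> V))" unfolding XV[OF V] by (rule gC[OF V])
          next
            fix V V' assume V: "V \<in> T" "V' \<in> T" "V \<subseteq> V'"
            show "res (topspace X \<inter> V') (topspace X \<inter> V) (g V') = g V"
              unfolding XV[OF V(1)] XV[OF V(2)] by (rule gcomp[OF V])
          qed
          show "\<forall>V\<in>T. res (topspace X \<inter> V) (U \<inter> V) (g V) = f V"
          proof
            fix V assume V: "V \<in> T"
            show "res (topspace X \<inter> V) (U \<inter> V) (g V) = f V" unfolding XV[OF V] by (rule gf[OF V])
          qed
        qed
      qed
    qed
  next
    assume H: "\<forall>U\<in>T_loc X T. Gamma_res_surj T F res (topspace X) U"
    show "T_flabby T F res" unfolding T_flabby_def
    proof (intro ballI impI)
      fix U V assume UV: "U \<in> T" "V \<in> T" "U \<subseteq> V"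
      have "U \<in> T_loc X T" unfolding T_loc_def using UV Topen Tint by blast
      then have surj: "Gamma_res_surj T F res (topspace X) U" using H by blast
      show "res V U ` carrier (F V) = carrier (F U)"
      proof
        show "res V U ` carrier (F V) \<subseteq> carrier (F U)" using resC UV by blast
      next
        show "carrier (F U) \<subseteq> res V U ` carrier (F V)"
        proof
          fix t assume t: "t \<in> carrier (F U)"
          define f where "f W = res U (U \<inter> W) t" for W
          have "f \<in> Gamma_loc T F res U"
            unfolding Gamma_loc_def
          proof (intro CollectI conjI ballI impI)
            fix W assume W: "W \<in> T"
            show "f W \<in> carrier (F (U \<inter> W))" unfolding f_def
              by (rule resC[OF Tint[OF UV(1) W] UV(1) Int_lower1 t])
          next
            fix W W' assume W: "W \<in> T" "W' \<in> T" "W \<subseteq> W'"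
            have sb: "U \<inter> W \<subseteq> U \<inter> W'" using W(3) by blast
            show "res (U \<inter> W') (U \<inter> W) (f W') = f W" unfolding f_def
              by (rule resT[OF Tint[OF UV(1) W(1)] Tint[OF UV(1) W(2)] UV(1) sb Int_lower1 t])
          qed
          then obtain g where g: "g \<in> Gamma_loc T F res (topspace X)"
            "\<forall>W\<in>T. res (topspace X \<inter> W) (U \<inter> W) (g W) = f W"
            using surj unfolding Gamma_res_surj_def by blast
          have XV: "topspace X \<inter> V = V" using sub UV by blast
          have UVi: "U \<inter> V = U" using UV(3) by blast
          have "\<forall>V\<in>T. g V \<in> carrier (F (topspace X \<inter> V))" using g(1) unfolding Gamma_loc_def by blast
          then have "g V \<in> carrier (F (topspace X \<inter> V))" using UV(2) by blast
          then have "g V \<in> carrier (F V)" unfolding XV .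
          moreover have "res (topspace X \<inter> V) (U \<inter> V) (g V) = f V" using g(2) UV(2) by blast
          then have "res V U (g V) = res U U t" unfolding XV UVi f_def .
          then have "res V U (g V) = t" using resI[OF UV(1) t] by simp
          ultimately show "t \<in> res V U ` carrier (F V)" by blast
        qed
      qed
    qed
  qed
qed

end
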